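(* Let $G$ be a finite simple graph with at least one edge and $\beta\in\mathbb{R}$. Then $M(t)=(d(t)+d(t)^* )^2\to0$ as $|t|\to\infty$, but $M(t)\neq0$ for every finite $t\in\mathbb{R}$.
   Context: For $k\ge0$ let $\Omega_k$ be the space of complex-valued functions on the (oriented) $k$-simplices of $G$ (complete subgraphs with $k+1$ vertices), $\Omega=\bigoplus_k\Omega_k$. The exterior derivative $d_0:\Omega_k\to\Omega_{k+1}$ is $(d_0f)(x_0,\dots,x_{k+1})=\sum_{j}(-1)^jf(x_0,\dots,\hat x_j,\dots,x_{k+1})$, $D_0=d_0+d_0^*$. For a self-adjoint operator $D$ on $\Omega$ whose blocks $\Omega_k\to\Omega_j$ vanish unless $|j-k|\le1$, write $D=d+d^*+b$ with $d$ the blocks $\Omega_k\to\Omega_{k+1}$ and $b$ the block-diagonal part. The Dirac deformation with real parameter $\beta$ is the solution $D(t)$ of $D'=BD-DB$, $D(0)=D_0$, with $B(t)=d(t)-d(t)^*+i\beta b(t)$, $D(t)=d(t)+d(t)^*+b(t)$ (the solution exists for all real $t$ and keeps this form). *)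

theory Defs
  imports Complex_Main
begin

text \<open>Operators on Omega are matrices indexed by simplices
(finite nonempty cliques). Each simplex is oriented by the linear order of the vertices.\<close>

type_synonym 'a op = "'a set \<Rightarrow> 'a set \<Rightarrow> complex"

definition simplices :: "'a set \<Rightarrow> ('a \<Rightarrow> 'a \<Rightarrow> bool) \<Rightarrow> 'a set set" where
  "simplices V E = {s. s \<subseteq> V \<and> s \<noteq> {} \<and> (\<forall>x\<in>s. \<forall>y\<in>s. x \<noteq> y \<longrightarrow> E x y)}"

definition sdim :: "'a set \<Rightarrow> nat" where
  "sdim s = card s - 1"

text \<open>Matrix of the exterior derivative d0 (row s in Omega_(k+1), column r in Omega_k):
 if s = r plus vertex v, the entry is (-1)^j with j the position of v in the sorted s.\<close>
definition ext_d0 :: "'a::linorder op" where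
  "ext_d0 s r = (if r \<subseteq> s \<and> card s = card r + 1
                 then (-1) ^ card {w\<in>s. w < the_elem (s - r)} else 0)"

definition adj :: "'a op \<Rightarrow> 'a op" where
  "adj A x y = cnj (A y x)"

definition opmult :: "'a set set \<Rightarrow> 'a op \<Rightarrow> 'a op \<Rightarrow> 'a op" where
  "opmult S A B x y = (\<Sum>z\<in>S. A x z * B z y)"

definition opadd :: "'a op \<Rightarrow> 'a op \<Rightarrow> 'a op" where
  "opadd A B x y = A x y + B x y"

definition dirac0 :: "'a::linorder op" where
  "dirac0 = opadd ext_d0 (adj ext_d0)"

definition upper_block :: "'a op \<Rightarrow> 'a op" where
  "upper_block A x y = (if sdim x = sdim y + 1 then A x y else 0)"

definition diag_block :: "'a op \<Rightarrow> 'a op" where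
  "diag_block A x y = (if sdim x = sdim y then A x y else 0)"

definition deform_B :: "real \<Rightarrow> 'a op \<Rightarrow> 'a op" where
  "deform_B \<beta> A x y =
     upper_block A x y - adj (upper_block A) x y + \<i> * complex_of_real \<beta> * diag_block A x y"

definition is_dirac_deformation ::
  "'a::linorder set \<Rightarrow> ('a \<Rightarrow> 'a \<Rightarrow> bool) \<Rightarrow> real \<Rightarrow> (real \<Rightarrow> 'a op) \<Rightarrow> bool" where
  "is_dirac_deformation V E \<beta> D \<longleftrightarrow>
     (let S = simplices V E in
      (\<forall>x\<in>S. \<forall>y\<in>S. D 0 x y = dirac0 x y) \<and>
      (\<forall>t. \<forall>x\<in>S. \<forall>y\<in>S.
         ((\<lambda>s. D s x y) has_vector_derivative
            (opmult S (deform_B \<beta> (D t)) (D t) x y - opmult S (D t) (deform_B \<beta> (D t)) x y))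
         (at t)))"

definition dirac_M :: "'a set set \<Rightarrow> 'a op \<Rightarrow> 'a op" where
  "dirac_M S A = (let L = opadd (upper_block A) (adj (upper_block A)) in opmult S L L)"

end

theory Submission
  imports Defs
begin

lemma deriv_cmod2:
  assumes "(z has_vector_derivative z') (at t)"
  shows "((\<lambda>s. (cmod (z s))^2) has_real_derivative 2 * Re (cnj (z t) * z')) (at t)"
proof -
  have r: "((\<lambda>s. Re (z s)) has_real_derivative Re z') (at t)"
    and i: "((\<lambda>s. Im (z s)) has_real_derivative Im z') (at t)"
    using assms has_vector_derivative_complex_iff by blast+
  have "((\<lambda>s. (Re (z s))^2 + (Im (z s))^2) has_real_derivative
          2 * Re (z t) * Re z' + 2 * Im (z t) * Im z') (at t)"
    by (auto intro!: derivative_eq_intros assms simp: algebra_simps)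
  moreover have "2 * Re (cnj (z t) * z') = 2 * Re (z t) * Re z' + 2 * Im (z t) * Im z'"
    by (simp add: algebra_simps)
  ultimately show ?thesis by (simp add: cmod_power2 mult.assoc)
qed

lemma gronwall_zero:
  fixes N N' c :: "real \<Rightarrow> real"
  assumes der: "\<And>t. (N has_real_derivative N' t) (at t)"
    and nn: "\<And>t. 0 \<le> N t"
    and bd: "\<And>t. \<bar>N' t\<bar> \<le> c t * N t"
    and cont: "continuous_on UNIV c"
    and z: "N t0 = 0"
  shows "N t = 0"
proof -
  define I where "I = {min t t0..max t t0}"
  have "compact I" unfolding I_def by simp
  moreover have "I \<noteq> {}" unfolding I_def by simp
  moreover have "continuous_on I c" using cont continuous_on_subset by blast
  ultimately obtain m where "m \<in> I" "\<forall>y\<in>I. c y \<le> c m"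
    using continuous_attains_sup by blast
  define C where "C = max 0 (c m)"
  have Cb: "\<And>s. s \<in> I \<Longrightarrow> \<bar>N' s\<bar> \<le> C * N s"
  proof -
    fix s assume "s \<in> I"
    then have "c s \<le> C" using \<open>\<forall>y\<in>I. c y \<le> c m\<close> C_def by fastforce
    then have "c s * N s \<le> C * N s" using nn by (simp add: mult_right_mono)
    then show "\<bar>N' s\<bar> \<le> C * N s" using bd[of s] by linarith
  qed
  show ?thesis
  proof (cases "t0 \<le> t")
    case True
    define g where "g s = N s * exp (- C * s)" for s
    have "g t \<le> g t0"
    proof (rule DERIV_nonpos_imp_nonincreasing[OF True])
      fix x assume x: "t0 \<le> x" "x \<le> t"
      then have "x \<in> I" unfolding I_def by auto
      have "(g has_real_derivative (N' x - C * N x) * exp (- C * x)) (at x)"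
        unfolding g_def by (auto intro!: derivative_eq_intros der simp: algebra_simps)
      moreover have "(N' x - C * N x) * exp (- C * x) \<le> 0"
        using Cb[OF \<open>x \<in> I\<close>] by (intro mult_nonpos_nonneg) auto
      ultimately show "\<exists>y. (g has_real_derivative y) (at x) \<and> y \<le> 0" by blast
    qed
    then have "N t * exp (- C * t) \<le> 0" using z unfolding g_def by simp
    then show ?thesis using nn[of t] by (simp add: mult_le_0_iff)
  next
    case False
    then have le: "t \<le> t0" by simp
    define g where "g s = N s * exp (C * s)" for s
    have "g t \<le> g t0"
    proof (rule DERIV_nonneg_imp_nondecreasing[OF le])
      fix x assume x: "t \<le> x" "x \<le> t0"
      then have "x \<in> I" unfolding I_def by auto
      have "(g has_real_derivative (N' x + C * N x) * exp (C * x)) (at x)"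
        unfolding g_def by (auto intro!: derivative_eq_intros der simp: algebra_simps)
      moreover have "(N' x + C * N x) * exp (C * x) \<ge> 0"
        using Cb[OF \<open>x \<in> I\<close>] by (intro mult_nonneg_nonneg) auto
      ultimately show "\<exists>y. (g has_real_derivative y) (at x) \<and> y \<ge> 0" by blast
    qed
    then have "N t * exp (C * t) \<le> 0" using z unfolding g_def by simp
    then show ?thesis using nn[of t] by (simp add: mult_le_0_iff)
  qed
qed

lemma sq_sum_le:
  fixes a :: "'b \<Rightarrow> real"
  assumes "finite T"
  shows "(\<Sum>i\<in>T. a i)^2 \<le> real (card T) * (\<Sum>i\<in>T. (a i)^2)"
proof -
  have "(\<Sum>i\<in>T. a i)^2 = (\<Sum>i\<in>T. \<Sum>j\<in>T. a i * a j)"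
    by (simp add: power2_eq_square sum_product)
  also have "\<dots> \<le> (\<Sum>i\<in>T. \<Sum>j\<in>T. ((a i)^2 + (a j)^2) / 2)"
  proof (intro sum_mono)
    fix i j
    have "0 \<le> (a i - a j)^2" by simp
    then show "a i * a j \<le> ((a i)^2 + (a j)^2) / 2" by (simp add: power2_eq_square algebra_simps)
  qed
  also have "\<dots> = (\<Sum>i\<in>T. \<Sum>j\<in>T. (a i)^2 / 2) + (\<Sum>i\<in>T. \<Sum>j\<in>T. (a j)^2 / 2)"
    by (simp add: add_divide_distrib sum.distrib)
  also have "\<dots> = real (card T) * (\<Sum>i\<in>T. (a i)^2)"
    by (simp add: sum_divide_distrib[symmetric] sum_distrib_left[symmetric])
  finally show ?thesis .
qed

lemma defect_zero:
  fixes D D' :: "real \<Rightarrow> 'b \<Rightarrow> 'b \<Rightarrow> complex" and c :: "real \<Rightarrow> real"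
  assumes fin: "finite S"
  and der: "\<And>t x y. x\<in>S \<Longrightarrow> y\<in>S \<Longrightarrow> ((\<lambda>s. D s x y) has_vector_derivative D' t x y) (at t)"
  and bnd: "\<And>t x y. x\<in>S \<Longrightarrow> y\<in>S \<Longrightarrow> cmod (D' t x y) \<le> c t * (\<Sum>u\<in>S. \<Sum>v\<in>S. cmod (D t u v))"
  and cont: "continuous_on UNIV c"
  and z: "\<And>x y. x\<in>S \<Longrightarrow> y\<in>S \<Longrightarrow> D t0 x y = 0"
  and xy: "x \<in> S" "y \<in> S"
  shows "D t x y = 0"
proof -
  define N where "N s = (\<Sum>x\<in>S. \<Sum>y\<in>S. (cmod (D s x y))^2)" for s
  define N' where "N' s = (\<Sum>x\<in>S. \<Sum>y\<in>S. 2 * Re (cnj (D s x y) * D' s x y))" for s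
  define A where "A s = (\<Sum>u\<in>S. \<Sum>v\<in>S. cmod (D s u v))" for s
  have dN: "(N has_real_derivative N' s) (at s)" for s
    unfolding N_def N'_def
    by (intro DERIV_sum deriv_cmod2 der)
  have AN: "(A s)^2 \<le> real (card S * card S) * N s" for s
  proof -
    have "(A s)^2 = (\<Sum>p\<in>S\<times>S. cmod (D s (fst p) (snd p)))^2"
      unfolding A_def by (simp add: sum.cartesian_product case_prod_beta)
    also have "\<dots> \<le> real (card (S\<times>S)) * (\<Sum>p\<in>S\<times>S. (cmod (D s (fst p) (snd p)))^2)"
      by (rule sq_sum_le) (simp add: fin)
    also have "\<dots> = real (card S * card S) * N s"
      unfolding N_def by (simp add: sum.cartesian_product case_prod_beta card_cartesian_product)
    finally show ?thesis .
  qed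
  have bN: "\<bar>N' s\<bar> \<le> (2 * \<bar>c s\<bar> * real (card S * card S)) * N s" for s
  proof -
    have "\<bar>N' s\<bar> \<le> (\<Sum>x\<in>S. \<Sum>y\<in>S. \<bar>2 * Re (cnj (D s x y) * D' s x y)\<bar>)"
      unfolding N'_def by (rule order_trans[OF sum_abs] sum_mono sum_abs)+
    also have "\<dots> \<le> (\<Sum>x\<in>S. \<Sum>y\<in>S. 2 * cmod (D s x y) * (\<bar>c s\<bar> * A s))"
    proof (intro sum_mono)
      fix x y assume "x \<in> S" "y \<in> S"
      have "\<bar>Re (cnj (D s x y) * D' s x y)\<bar> \<le> cmod (D s x y) * cmod (D' s x y)"
        using abs_Re_le_cmod[of "cnj (D s x y) * D' s x y"] by (simp add: norm_mult)
      also have "\<dots> \<le> cmod (D s x y) * (\<bar>c s\<bar> * A s)"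
        using bnd[OF \<open>x\<in>S\<close> \<open>y\<in>S\<close>, of s] unfolding A_def
        by (intro mult_left_mono) (auto intro!: order_trans[OF _ mult_right_mono[OF abs_ge_self]] sum_nonneg)
      finally show "\<bar>2 * Re (cnj (D s x y) * D' s x y)\<bar> \<le> 2 * cmod (D s x y) * (\<bar>c s\<bar> * A s)"
        by simp
    qed
    also have "\<dots> = A s * (2 * (\<bar>c s\<bar> * A s))"
    proof -
      have "\<And>K::real. (\<Sum>x\<in>S. \<Sum>y\<in>S. 2 * cmod (D s x y) * K) = A s * (2 * K)"
        unfolding A_def by (simp add: sum_distrib_left sum_distrib_right mult_ac)
      then show ?thesis .
    qed
    also have "\<dots> = 2 * \<bar>c s\<bar> * (A s)^2"
      by (simp add: power2_eq_square mult_ac)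
    also have "\<dots> \<le> 2 * \<bar>c s\<bar> * (real (card S * card S) * N s)"
      using AN[of s] by (intro mult_left_mono) auto
    finally show ?thesis by (simp add: mult_ac)
  qed
  have "N t = 0"
  proof (rule gronwall_zero[of N N' "\<lambda>s. 2 * \<bar>c s\<bar> * real (card S * card S)" t0 t])
    show "(N has_real_derivative N' s) (at s)" for s by (rule dN)
    show "0 \<le> N s" for s unfolding N_def by (intro sum_nonneg) auto
    show "\<bar>N' s\<bar> \<le> (2 * \<bar>c s\<bar> * real (card S * card S)) * N s" for s by (rule bN)
    show "continuous_on UNIV (\<lambda>s. 2 * \<bar>c s\<bar> * real (card S * card S))"
      using cont by (intro continuous_intros)
    show "N t0 = 0" unfolding N_def using z by simp
  qed
  then have "(\<Sum>x\<in>S. \<Sum>y\<in>S. (cmod (D t x y))^2) = 0" unfolding N_def .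
  then have "\<forall>x\<in>S. \<forall>y\<in>S. (cmod (D t x y))^2 = 0"
    using fin by (simp add: sum_nonneg_eq_0_iff sum_nonneg)
  then show ?thesis using xy by simp
qed

lemma lin_bound:
  fixes T :: "'b \<Rightarrow> complex" and G :: "'b \<Rightarrow> 'b \<Rightarrow> complex"
  assumes fin: "finite S" and xy: "x \<in> S" "y \<in> S" and k: "0 \<le> k"
    and b: "\<And>z. z \<in> S \<Longrightarrow> cmod (T z) \<le> k * (cmod (G z y) + cmod (G x z))"
  shows "cmod (\<Sum>z\<in>S. T z) \<le> (2 * k) * (\<Sum>u\<in>S. \<Sum>v\<in>S. cmod (G u v))"
proof -
  have "cmod (\<Sum>z\<in>S. T z) \<le> (\<Sum>z\<in>S. cmod (T z))" by (rule norm_sum)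
  also have "\<dots> \<le> (\<Sum>z\<in>S. k * (cmod (G z y) + cmod (G x z)))" by (intro sum_mono b)
  also have "\<dots> = k * ((\<Sum>z\<in>S. cmod (G z y)) + (\<Sum>z\<in>S. cmod (G x z)))"
    by (simp add: distrib_left sum.distrib sum_distrib_left)
  also have "\<dots> \<le> k * ((\<Sum>u\<in>S. \<Sum>v\<in>S. cmod (G u v)) + (\<Sum>u\<in>S. \<Sum>v\<in>S. cmod (G u v)))"
  proof (intro mult_left_mono add_mono k)
    show "(\<Sum>z\<in>S. cmod (G z y)) \<le> (\<Sum>u\<in>S. \<Sum>v\<in>S. cmod (G u v))"
      by (intro sum_mono member_le_sum) (auto simp: fin xy)
    have "(\<Sum>z\<in>S. cmod (G x z)) \<le> (\<Sum>u\<in>S. \<Sum>v\<in>S. cmod (G u v))"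
      using member_le_sum[of x S "\<lambda>u. \<Sum>v\<in>S. cmod (G u v)"] fin xy by (simp add: sum_nonneg)
    then show "(\<Sum>z\<in>S. cmod (G x z)) \<le> (\<Sum>u\<in>S. \<Sum>v\<in>S. cmod (G u v))" .
  qed
  finally show ?thesis by simp
qed

lemma B_up: "sdim x = sdim y + 1 \<Longrightarrow> deform_B \<beta> A x y = A x y"
  by (simp add: deform_B_def upper_block_def adj_def diag_block_def)
lemma B_down: "sdim y = sdim x + 1 \<Longrightarrow> deform_B \<beta> A x y = - cnj (A y x)"
  by (simp add: deform_B_def upper_block_def adj_def diag_block_def)
lemma B_diag: "sdim x = sdim y \<Longrightarrow> deform_B \<beta> A x y = \<i> * complex_of_real \<beta> * A x y"
  by (simp add: deform_B_def upper_block_def adj_def diag_block_def)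
lemma B_far: "sdim x \<noteq> sdim y + 1 \<Longrightarrow> sdim y \<noteq> sdim x + 1 \<Longrightarrow> sdim x \<noteq> sdim y \<Longrightarrow> deform_B \<beta> A x y = 0"
  by (simp add: deform_B_def upper_block_def adj_def diag_block_def)

lemma B_bound: "cmod (deform_B \<beta> A x y) \<le> (1 + \<bar>\<beta>\<bar>) * (cmod (A x y) + cmod (A y x))"
proof -
  consider "sdim x = sdim y + 1" | "sdim y = sdim x + 1" | "sdim x = sdim y"
    | "sdim x \<noteq> sdim y + 1" "sdim y \<noteq> sdim x + 1" "sdim x \<noteq> sdim y" by blast
  then show ?thesis
  proof cases
    case 1 then show ?thesis by (simp add: B_up algebra_simps)
  next
    case 2 then show ?thesis by (simp add: B_down algebra_simps)
  next
    case 3 then show ?thesis by (simp add: B_diag norm_mult algebra_simps)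
  next
    case 4 then show ?thesis by (simp add: B_far)
  qed
qed

lemma cmod4: "cmod (a - b - c + d) \<le> cmod a + cmod b + cmod c + cmod d"
proof -
  have "cmod (a - b - c + d) \<le> cmod (a - b - c) + cmod d" by (rule norm_triangle_ineq)
  moreover have "cmod (a - b - c) \<le> cmod (a - b) + cmod c" by (rule norm_triangle_ineq4)
  moreover have "cmod (a - b) \<le> cmod a + cmod b" by (rule norm_triangle_ineq4)
  ultimately show ?thesis by linarith
qed


lemma barbalat_top:
  fixes L f f' :: "real \<Rightarrow> real"
  assumes dL: "\<And>t. (L has_real_derivative 2 * f t) (at t)"
    and df: "\<And>t. (f has_real_derivative f' t) (at t)"
    and bf: "\<And>t. \<bar>f' t\<bar> \<le> Kf"
    and bL: "\<And>t. \<bar>L t\<bar> \<le> Lb"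
    and nn: "\<And>t. 0 \<le> f t"
  shows "(f \<longlongrightarrow> 0) at_top"
proof -
  have mono: "L s \<le> L t" if "s \<le> t" for s t
  proof (rule DERIV_nonneg_imp_nondecreasing[OF that])
    fix x show "\<exists>y. (L has_real_derivative y) (at x) \<and> 0 \<le> y" using dL[of x] nn[of x] by auto
  qed
  have bdd: "bdd_above (range L)" using bL by (auto intro!: bdd_aboveI[of _ Lb] simp: abs_le_iff)
  define Ls where "Ls = Sup (range L)"
  have Lle: "L t \<le> Ls" for t unfolding Ls_def using bdd by (auto intro: cSup_upper)
  have Kf0: "0 \<le> Kf" using bf[of 0] by simp
  show ?thesis
  proof (rule tendstoI)
    fix e :: real assume e: "e > 0"
    define h where "h = e / (4 * (Kf + 1))"
    have h: "h > 0" unfolding h_def using e Kf0 by simp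
    have hK: "h * Kf \<le> e / 4"
    proof -
      have "h * Kf \<le> h * (Kf + 1)" using h by simp
      also have "\<dots> = e / 4" unfolding h_def using Kf0 by (simp add: field_simps)
      finally show ?thesis .
    qed
    have "\<exists>t1. Ls - e * h < L t1"
    proof (rule ccontr)
      assume "\<not> ?thesis"
      then have "\<forall>t. L t \<le> Ls - e * h" by (auto simp: not_less)
      then have "Ls \<le> Ls - e * h" unfolding Ls_def by (intro cSUP_least) auto
      moreover have "0 < e * h" using e h by simp
      ultimately show False by simp
    qed
    then obtain t1 where t1: "Ls - e * h < L t1" by blast
    have "\<forall>t\<ge>t1. dist (f t) 0 < e"
    proof (intro allI impI)
      fix t assume tt: "t1 \<le> t"
      obtain \<xi> where \<xi>: "t < \<xi>" "\<xi> < t + h" "L (t + h) - L t = (t + h - t) * (2 * f \<xi>)"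
        using MVT2[of t "t + h" L "\<lambda>s. 2 * f s"] h dL by auto
      obtain \<eta> where \<eta>: "t < \<eta>" "\<eta> < \<xi>" "f \<xi> - f t = (\<xi> - t) * f' \<eta>"
        using MVT2[of t \<xi> f f'] \<xi> df by auto
      have "L (t + h) - L t < e * h" using Lle[of "t+h"] mono[OF tt] t1 by linarith
      then have "h * (2 * f \<xi>) < h * e" using \<xi>(3) by (simp add: mult_ac)
      then have f\<xi>: "2 * f \<xi> < e" using h by simp
      have "- ((\<xi> - t) * f' \<eta>) \<le> (\<xi> - t) * Kf"
        using bf[of \<eta>] \<xi> by (simp add: abs_le_iff mult_left_mono flip: mult_minus_right)
      also have "\<dots> \<le> h * Kf" using \<xi> Kf0 by (intro mult_right_mono) auto
      finally have "f t \<le> f \<xi> + h * Kf" using \<eta>(3) by linarith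
      then have "f t < e" using f\<xi> hK e by linarith
      then show "dist (f t) 0 < e" using nn[of t] by simp
    qed
    then show "eventually (\<lambda>t. dist (f t) 0 < e) at_top"
      unfolding eventually_at_top_linorder by blast
  qed
qed

lemma barbalat_bot:
  fixes L f f' :: "real \<Rightarrow> real"
  assumes dL: "\<And>t. (L has_real_derivative 2 * f t) (at t)"
    and df: "\<And>t. (f has_real_derivative f' t) (at t)"
    and bf: "\<And>t. \<bar>f' t\<bar> \<le> Kf"
    and bL: "\<And>t. \<bar>L t\<bar> \<le> Lb"
    and nn: "\<And>t. 0 \<le> f t"
  shows "(f \<longlongrightarrow> 0) at_bot"
proof -
  have "((\<lambda>t. f (- t)) \<longlongrightarrow> 0) at_top"
  proof (rule barbalat_top[where L="\<lambda>t. - L (- t)" and f' = "\<lambda>t. - f' (- t)" and Kf = Kf and Lb = Lb])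
    show "((\<lambda>t. - L (- t)) has_real_derivative 2 * f (- t)) (at t)" for t
      using DERIV_mirror[where f=L and x=t and y="2 * f (-t)"] dL[of "-t"] DERIV_minus by fastforce
    show "((\<lambda>t. f (- t)) has_real_derivative - f' (- t)) (at t)" for t
      using DERIV_mirror[where f=f and x=t and y="f' (-t)"] df[of "-t"] by simp
  qed (use bf bL nn in auto)
  then show ?thesis by (simp add: filterlim_at_bot_mirror)
qed

locale deform =
  fixes S :: "'a set set" and \<beta> :: real and D :: "real \<Rightarrow> 'a set \<Rightarrow> 'a set \<Rightarrow> complex"
  assumes fin: "finite S"
  and der0: "\<And>t x y. x\<in>S \<Longrightarrow> y\<in>S \<Longrightarrow> ((\<lambda>s. D s x y) has_vector_derivative
         (opmult S (deform_B \<beta> (D t)) (D t) x y - opmult S (D t) (deform_B \<beta> (D t)) x y)) (at t)"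
  and herm0: "\<And>x y. x\<in>S \<Longrightarrow> y\<in>S \<Longrightarrow> D 0 x y = cnj (D 0 y x)"
  and far0: "\<And>x y. x\<in>S \<Longrightarrow> y\<in>S \<Longrightarrow> sdim y + 2 \<le> sdim x \<or> sdim x + 2 \<le> sdim y \<Longrightarrow> D 0 x y = 0"
begin

definition "F t x y = opmult S (deform_B \<beta> (D t)) (D t) x y - opmult S (D t) (deform_B \<beta> (D t)) x y"
abbreviation "B t \<equiv> deform_B \<beta> (D t)"
definition "K t = (\<Sum>u\<in>S. \<Sum>v\<in>S. cmod (D t u v))"

lemma derF: "x\<in>S \<Longrightarrow> y\<in>S \<Longrightarrow> ((\<lambda>s. D s x y) has_vector_derivative F t x y) (at t)"
  unfolding F_def by (rule der0)

lemma F_sum: "F t x y = (\<Sum>z\<in>S. B t x z * D t z y - D t x z * B t z y)"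
  unfolding F_def opmult_def by (simp add: sum_subtractf)

lemma contD: "x\<in>S \<Longrightarrow> y\<in>S \<Longrightarrow> continuous_on UNIV (\<lambda>t. D t x y)"
  by (intro continuous_at_imp_continuous_on ballI has_vector_derivative_continuous[OF derF])

lemma contK: "continuous_on UNIV K"
  unfolding K_def by (intro continuous_intros contD) auto

lemma K_nonneg: "0 \<le> K t"
  unfolding K_def by (intro sum_nonneg) auto

lemma D_le_K: "x\<in>S \<Longrightarrow> y\<in>S \<Longrightarrow> cmod (D t x y) \<le> K t"
proof -
  assume xy: "x\<in>S" "y\<in>S"
  have "cmod (D t x y) \<le> (\<Sum>v\<in>S. cmod (D t x v))"
    using member_le_sum[of y S "\<lambda>v. cmod (D t x v)"] fin xy by simp
  also have "\<dots> \<le> K t"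
    using member_le_sum[of x S "\<lambda>u. \<Sum>v\<in>S. cmod (D t u v)"] fin xy unfolding K_def by (simp add: sum_nonneg)
  finally show ?thesis .
qed

lemma B_le_K: "x\<in>S \<Longrightarrow> y\<in>S \<Longrightarrow> cmod (B t x y) \<le> 2 * (1 + \<bar>\<beta>\<bar>) * K t"
proof -
  assume xy: "x\<in>S" "y\<in>S"
  have "cmod (B t x y) \<le> (1 + \<bar>\<beta>\<bar>) * (cmod (D t x y) + cmod (D t y x))" by (rule B_bound)
  also have "\<dots> \<le> (1 + \<bar>\<beta>\<bar>) * (K t + K t)"
    using D_le_K[OF xy] D_le_K[OF xy(2,1)] by (intro mult_left_mono add_mono) auto
  finally show ?thesis by (simp add: algebra_simps)
qed

lemma herm_term:
  "deform_B \<beta> A x z * A z y - A x z * deform_B \<beta> A z y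
    - cnj (deform_B \<beta> A y z * A z x - A y z * deform_B \<beta> A z x)
   = deform_B \<beta> A x z * (A z y - cnj (A y z)) - (A x z - cnj (A z x)) * deform_B \<beta> A z y
     - \<i> * complex_of_real \<beta> * cnj (A z x) * (if sdim z = sdim y then A z y - cnj (A y z) else 0)
     + \<i> * complex_of_real \<beta> * (if sdim x = sdim z then A x z - cnj (A z x) else 0) * cnj (A y z)"
  unfolding deform_B_def upper_block_def adj_def diag_block_def
  by (auto simp: algebra_simps)

lemma herm: assumes "x\<in>S" "y\<in>S" shows "D t x y = cnj (D t y x)"
proof -
  define G where "G t x y = D t x y - cnj (D t y x)" for t x y
  define k where "k t = 2 * (1 + \<bar>\<beta>\<bar>) * K t + \<bar>\<beta>\<bar> * K t" for t
  have "G t x y = 0"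
  proof (rule defect_zero[of S G "\<lambda>t x y. F t x y - cnj (F t y x)" "\<lambda>t. 2 * k t" 0])
    show "finite S" by (rule fin)
    show "((\<lambda>s. G s x y) has_vector_derivative F t x y - cnj (F t y x)) (at t)"
      if "x\<in>S" "y\<in>S" for t x y
      unfolding G_def using that by (auto intro!: derivative_eq_intros derF)
    show "continuous_on UNIV (\<lambda>t. 2 * k t)" unfolding k_def using contK by (intro continuous_intros)
    show "G 0 x y = 0" if "x\<in>S" "y\<in>S" for x y unfolding G_def using herm0[OF that] by simp
    show "x \<in> S" "y \<in> S" by fact+
    show "cmod (F t x y - cnj (F t y x)) \<le> 2 * k t * (\<Sum>u\<in>S. \<Sum>v\<in>S. cmod (G t u v))"
      if xy: "x\<in>S" "y\<in>S" for t x y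
    proof -
      define g where "g x z = (if sdim x = sdim z then G t x z else 0)" for x z
      define T where "T z = B t x z * G t z y - G t x z * B t z y
          - \<i> * complex_of_real \<beta> * cnj (D t z x) * g z y
          + \<i> * complex_of_real \<beta> * g x z * cnj (D t y z)" for z
      have "F t x y - cnj (F t y x) = (\<Sum>z\<in>S. T z)"
        unfolding F_sum cnj_sum sum_subtractf[symmetric] T_def g_def G_def
        by (intro sum.cong refl herm_term)
      also have "cmod \<dots> \<le> (2 * k t) * (\<Sum>u\<in>S. \<Sum>v\<in>S. cmod (G t u v))"
      proof (rule lin_bound[OF fin xy])
        show "0 \<le> k t" unfolding k_def using K_nonneg[of t] by simp
        fix z assume z: "z \<in> S"
        have g1: "cmod (g z y) \<le> cmod (G t z y)" and g2: "cmod (g x z) \<le> cmod (G t x z)"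
          unfolding g_def by auto
        have a1: "cmod (B t x z * G t z y) \<le> 2 * (1 + \<bar>\<beta>\<bar>) * K t * cmod (G t z y)"
          unfolding norm_mult by (intro mult_right_mono B_le_K xy z) auto
        have a2: "cmod (G t x z * B t z y) \<le> 2 * (1 + \<bar>\<beta>\<bar>) * K t * cmod (G t x z)"
          unfolding norm_mult by (subst mult.commute) (intro mult_right_mono B_le_K xy z, auto)
        have a3: "cmod (\<i> * complex_of_real \<beta> * cnj (D t z x) * g z y) \<le> \<bar>\<beta>\<bar> * K t * cmod (G t z y)"
          unfolding norm_mult using D_le_K[OF z xy(1), of t] g1
          by (auto intro!: mult_mono mult_left_mono simp: K_nonneg)
        have a4: "cmod (\<i> * complex_of_real \<beta> * g x z * cnj (D t y z)) \<le> \<bar>\<beta>\<bar> * K t * cmod (G t x z)"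
        proof -
          have "cmod (g x z) * cmod (D t y z) \<le> cmod (G t x z) * K t"
            using g2 D_le_K[OF xy(2) z, of t] by (intro mult_mono) auto
          then have "\<bar>\<beta>\<bar> * (cmod (g x z) * cmod (D t y z)) \<le> \<bar>\<beta>\<bar> * (cmod (G t x z) * K t)"
            by (rule mult_left_mono) simp
          then show ?thesis by (simp add: norm_mult mult_ac)
        qed
        have "cmod (T z) \<le> 2 * (1 + \<bar>\<beta>\<bar>) * K t * cmod (G t z y) + 2 * (1 + \<bar>\<beta>\<bar>) * K t * cmod (G t x z)
              + \<bar>\<beta>\<bar> * K t * cmod (G t z y) + \<bar>\<beta>\<bar> * K t * cmod (G t x z)"
          unfolding T_def using cmod4 a1 a2 a3 a4 by (smt (verit))
        also have "\<dots> = k t * (cmod (G t z y) + cmod (G t x z))"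
          unfolding k_def by (simp add: algebra_simps)
        finally show "cmod (T z) \<le> k t * (cmod (G t z y) + cmod (G t x z))" .
      qed
      finally show ?thesis .
    qed
  qed
  then show ?thesis unfolding G_def by simp
qed


abbreviation "farr x y \<equiv> (sdim y + 2 \<le> sdim x \<or> sdim x + 2 \<le> sdim y)"

lemma far_term:
  assumes "farr x y" "A z y = cnj (A y z)" "A x z = cnj (A z x)"
  shows "deform_B \<beta> A x z * A z y - A x z * deform_B \<beta> A z y
    = deform_B \<beta> A x z * (if farr z y then A z y else 0) - (if farr x z then A x z else 0) * deform_B \<beta> A z y"
  using assms unfolding deform_B_def upper_block_def adj_def diag_block_def
  by (auto simp: algebra_simps)

lemma farz: assumes "x\<in>S" "y\<in>S" "farr x y" shows "D t x y = 0"
proof -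
  define R where "R t x y = (if farr x y then D t x y else 0)" for t x y
  define k where "k t = 2 * (1 + \<bar>\<beta>\<bar>) * K t" for t
  have "R t x y = 0"
  proof (rule defect_zero[of S R "\<lambda>t x y. if farr x y then F t x y else 0" "\<lambda>t. 2 * k t" 0])
    show "finite S" by (rule fin)
    show "((\<lambda>s. R s x y) has_vector_derivative (if farr x y then F t x y else 0)) (at t)"
      if "x\<in>S" "y\<in>S" for t x y
      unfolding R_def using that by (auto intro!: derivative_eq_intros derF)
    show "continuous_on UNIV (\<lambda>t. 2 * k t)" unfolding k_def using contK by (intro continuous_intros)
    show "R 0 x y = 0" if "x\<in>S" "y\<in>S" for x y unfolding R_def using far0[OF that] by simp
    show "x \<in> S" "y \<in> S" by fact+
    show "cmod (if farr x y then F t x y else 0) \<le> 2 * k t * (\<Sum>u\<in>S. \<Sum>v\<in>S. cmod (R t u v))"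
      if xy: "x\<in>S" "y\<in>S" for t x y
    proof (cases "farr x y")
      case False
      have "0 \<le> k t" unfolding k_def using K_nonneg[of t] by simp
      then show ?thesis using False by (simp add: sum_nonneg)
    next
      case True
      define T where "T z = B t x z * R t z y - R t x z * B t z y" for z
      have "F t x y = (\<Sum>z\<in>S. T z)"
        unfolding F_sum T_def R_def
        by (intro sum.cong refl far_term True) (auto intro: herm xy)
      also have "cmod \<dots> \<le> (2 * k t) * (\<Sum>u\<in>S. \<Sum>v\<in>S. cmod (R t u v))"
      proof (rule lin_bound[OF fin xy])
        show "0 \<le> k t" unfolding k_def using K_nonneg[of t] by simp
        fix z assume z: "z \<in> S"
        have a1: "cmod (B t x z * R t z y) \<le> k t * cmod (R t z y)"
          unfolding norm_mult k_def by (intro mult_right_mono B_le_K xy z) auto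
        have a2: "cmod (R t x z * B t z y) \<le> k t * cmod (R t x z)"
          unfolding norm_mult k_def by (subst mult.commute) (intro mult_right_mono B_le_K xy z, auto)
        have "cmod (T z) \<le> k t * cmod (R t z y) + k t * cmod (R t x z)"
          unfolding T_def using norm_triangle_ineq4 a1 a2 by (smt (verit))
        then show "cmod (T z) \<le> k t * (cmod (R t z y) + cmod (R t x z))"
          by (simp add: algebra_simps)
      qed
      finally show ?thesis using True by simp
    qed
  qed
  then show ?thesis unfolding R_def using assms by simp
qed

lemma up_term:
  assumes "sdim x = sdim y + 1" "A x z = cnj (A z x)"
    "farr z y \<Longrightarrow> A z y = 0" "farr x z \<Longrightarrow> A x z = 0"
  shows "deform_B \<beta> A x z * A z y - A x z * deform_B \<beta> A z y
    = (if sdim z = sdim x then (\<i> * complex_of_real \<beta> - 1) * A x z * upper_block A z y else 0)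
      + (if sdim z = sdim y then (1 - \<i> * complex_of_real \<beta>) * upper_block A x z * A z y else 0)"
  using assms unfolding deform_B_def upper_block_def adj_def diag_block_def
  by (auto simp: algebra_simps)

lemma up_zero:
  assumes z0: "\<And>x y. x\<in>S \<Longrightarrow> y\<in>S \<Longrightarrow> upper_block (D t0) x y = 0"
    and xy: "x\<in>S" "y\<in>S"
  shows "upper_block (D t) x y = 0"
proof -
  define u where "u t x y = upper_block (D t) x y" for t x y
  define k where "k t = (1 + \<bar>\<beta>\<bar>) * K t" for t
  have "u t x y = 0"
  proof (rule defect_zero[of S u "\<lambda>t x y. upper_block (F t) x y" "\<lambda>t. 2 * k t" t0])
    show "finite S" by (rule fin)
    show "((\<lambda>s. u s x y) has_vector_derivative upper_block (F t) x y) (at t)"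
      if "x\<in>S" "y\<in>S" for t x y
      unfolding u_def upper_block_def using that by (auto intro!: derivative_eq_intros derF)
    show "continuous_on UNIV (\<lambda>t. 2 * k t)" unfolding k_def using contK by (intro continuous_intros)
    show "u t0 x y = 0" if "x\<in>S" "y\<in>S" for x y unfolding u_def using z0[OF that] by simp
    show "x \<in> S" "y \<in> S" by fact+
    show "cmod (upper_block (F t) x y) \<le> 2 * k t * (\<Sum>a\<in>S. \<Sum>b\<in>S. cmod (u t a b))"
      if xy: "x\<in>S" "y\<in>S" for t x y
    proof (cases "sdim x = sdim y + 1")
      case False
      have "0 \<le> k t" unfolding k_def using K_nonneg[of t] by simp
      then show ?thesis using False by (simp add: sum_nonneg upper_block_def)
    next
      case True
      define T where "T z = (if sdim z = sdim x then (\<i> * complex_of_real \<beta> - 1) * D t x z * u t z y else 0)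
      + (if sdim z = sdim y then (1 - \<i> * complex_of_real \<beta>) * u t x z * D t z y else 0)" for z
      have "upper_block (F t) x y = F t x y" using True by (simp add: upper_block_def)
      also have "\<dots> = (\<Sum>z\<in>S. T z)"
        unfolding F_sum T_def u_def
        by (intro sum.cong refl up_term True) (auto intro: herm farz xy)
      also have "cmod \<dots> \<le> (2 * k t) * (\<Sum>a\<in>S. \<Sum>b\<in>S. cmod (u t a b))"
      proof (rule lin_bound[OF fin xy])
        show "0 \<le> k t" unfolding k_def using K_nonneg[of t] by simp
        fix z assume z: "z \<in> S"
        have c1: "cmod (\<i> * complex_of_real \<beta> - 1) \<le> 1 + \<bar>\<beta>\<bar>"
          using norm_triangle_ineq4[of "\<i> * complex_of_real \<beta>" 1] by (simp add: norm_mult)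
        have c2: "cmod (1 - \<i> * complex_of_real \<beta>) \<le> 1 + \<bar>\<beta>\<bar>"
          using norm_triangle_ineq4[of 1 "\<i> * complex_of_real \<beta>"] by (simp add: norm_mult)
        have a1: "cmod ((\<i> * complex_of_real \<beta> - 1) * D t x z * u t z y) \<le> k t * cmod (u t z y)"
          unfolding norm_mult k_def using c1 D_le_K[OF xy(1) z, of t]
          by (intro mult_right_mono mult_mono) auto
        have a2: "cmod ((1 - \<i> * complex_of_real \<beta>) * u t x z * D t z y) \<le> k t * cmod (u t x z)"
        proof -
          have "cmod (1 - \<i> * complex_of_real \<beta>) * cmod (D t z y) \<le> (1 + \<bar>\<beta>\<bar>) * K t"
            using c2 D_le_K[OF z xy(2), of t] by (intro mult_mono) auto
          then have "cmod (1 - \<i> * complex_of_real \<beta>) * cmod (D t z y) * cmod (u t x z) \<le> (1 + \<bar>\<beta>\<bar>) * K t * cmod (u t x z)"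
            by (rule mult_right_mono) simp
          then show ?thesis unfolding k_def norm_mult by (simp add: mult_ac)
        qed
        have "0 \<le> k t * cmod (u t z y)" "0 \<le> k t * cmod (u t x z)"
          unfolding k_def using K_nonneg[of t] by auto
        then have "cmod (T z) \<le> k t * cmod (u t z y) + k t * cmod (u t x z)"
          unfolding T_def using a1 a2 norm_triangle_ineq[of "(if sdim z = sdim x then (\<i> * complex_of_real \<beta> - 1) * D t x z * u t z y else 0)" "(if sdim z = sdim y then (1 - \<i> * complex_of_real \<beta>) * u t x z * D t z y else 0)"]
          by (auto split: if_splits)
        then show "cmod (T z) \<le> k t * (cmod (u t z y) + cmod (u t x z))"
          by (simp add: algebra_simps)
      qed
      finally show ?thesis .
    qed
  qed
  then show ?thesis unfolding u_def .
qed


definition "En t = (\<Sum>x\<in>S. \<Sum>y\<in>S. (cmod (D t x y))^2)"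

lemma trace_zero: "(\<Sum>x\<in>S. \<Sum>y\<in>S. cnj (D t x y) * F t x y) = 0"
proof -
  define P where "P x y z = D t y x * B t x z * D t z y" for x y z
  have h: "\<And>x y. x\<in>S \<Longrightarrow> y\<in>S \<Longrightarrow> cnj (D t x y) = D t y x"
    using herm by (metis complex_cnj_cnj)
  have "(\<Sum>x\<in>S. \<Sum>y\<in>S. cnj (D t x y) * F t x y) = (\<Sum>x\<in>S. \<Sum>y\<in>S. D t y x * F t x y)"
    by (simp add: h)
  also have "\<dots>
      = (\<Sum>x\<in>S. \<Sum>y\<in>S. \<Sum>z\<in>S. P x y z) - (\<Sum>x\<in>S. \<Sum>y\<in>S. \<Sum>z\<in>S. P z x y)"
    unfolding F_sum sum_subtractf[symmetric] P_def
    by (intro sum.cong refl) (auto simp: sum_distrib_left algebra_simps sum_subtractf[symmetric]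
          intro!: sum.cong)
  also have "(\<Sum>x\<in>S. \<Sum>y\<in>S. \<Sum>z\<in>S. P z x y) = (\<Sum>x\<in>S. \<Sum>z\<in>S. \<Sum>y\<in>S. P z x y)"
    by (intro sum.cong refl sum.swap)
  also have "\<dots> = (\<Sum>z\<in>S. \<Sum>x\<in>S. \<Sum>y\<in>S. P z x y)"
    by (rule sum.swap)
  finally show ?thesis by simp
qed

lemma En_const: "En t = En 0"
proof -
  have "(En has_real_derivative 0) (at s)" for s
  proof -
    have "(En has_real_derivative (\<Sum>x\<in>S. \<Sum>y\<in>S. 2 * Re (cnj (D s x y) * F s x y))) (at s)"
      unfolding En_def by (intro DERIV_sum deriv_cmod2 derF) auto
    moreover have "(\<Sum>x\<in>S. \<Sum>y\<in>S. 2 * Re (cnj (D s x y) * F s x y)) = 2 * Re (\<Sum>x\<in>S. \<Sum>y\<in>S. cnj (D s x y) * F s x y)"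
      by (simp add: sum_distrib_left)
    ultimately show ?thesis using trace_zero[of s] by simp
  qed
  then show ?thesis using DERIV_isconst_all by blast
qed

definition "s0 = sqrt (En 0)"

lemma En_nonneg: "0 \<le> En t" unfolding En_def by (simp add: sum_nonneg)

lemma D_bound: assumes "x\<in>S" "y\<in>S" shows "cmod (D t x y) \<le> s0"
proof -
  have "(cmod (D t x y))^2 \<le> (\<Sum>v\<in>S. (cmod (D t x v))^2)"
    using member_le_sum[of y S "\<lambda>v. (cmod (D t x v))^2"] fin assms by simp
  also have "\<dots> \<le> En t"
    using member_le_sum[of x S "\<lambda>u. \<Sum>v\<in>S. (cmod (D t u v))^2"] fin assms unfolding En_def by (simp add: sum_nonneg)
  finally have "(cmod (D t x y))^2 \<le> En 0" using En_const[of t] by simp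
  then show ?thesis unfolding s0_def using En_nonneg[of 0] by (simp add: real_le_rsqrt)
qed

lemma s0_nonneg: "0 \<le> s0" using En_nonneg[of 0] unfolding s0_def by simp

definition "Lf t = (\<Sum>x\<in>S. real (sdim x) * Re (D t x x))"
definition "ff t = (\<Sum>x\<in>S. \<Sum>z\<in>S. (cmod (upper_block (D t) x z))^2)"

lemma cmod_sq': "cmod a * cmod a = Re a * Re a + Im a * Im a"
  by (metis cmod_power2 power2_eq_square)

lemma lyap_term:
  assumes "A z x = cnj (A x z)"
  shows "Re (deform_B \<beta> A x z * A z x - A x z * deform_B \<beta> A z x)
     = 2 * (cmod (upper_block A x z))^2 - 2 * (cmod (upper_block A z x))^2"
  using assms unfolding deform_B_def upper_block_def adj_def diag_block_def
  by (auto simp: power2_eq_square cmod_sq' algebra_simps)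

lemma Lf_deriv: "(Lf has_real_derivative 2 * ff t) (at t)"
proof -
  define u where "u x z = (cmod (upper_block (D t) x z))^2" for x z
  have "(Lf has_real_derivative (\<Sum>x\<in>S. real (sdim x) * Re (F t x x))) (at t)"
    unfolding Lf_def by (intro DERIV_sum DERIV_cmult has_field_derivative_Re derF) auto
  moreover have "(\<Sum>x\<in>S. real (sdim x) * Re (F t x x)) = (\<Sum>x\<in>S. \<Sum>z\<in>S. real (sdim x) * (2 * u x z - 2 * u z x))"
  proof -
    have lt: "\<And>x z. x\<in>S \<Longrightarrow> z\<in>S \<Longrightarrow> Re (B t x z * D t z x - D t x z * B t z x) = 2 * u x z - 2 * u z x"
      unfolding u_def by (intro lyap_term herm)
    show ?thesis
      unfolding F_sum Re_sum sum_distrib_left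
      by (intro sum.cong refl arg_cong2[where f="(*)"] lt) auto
  qed
  moreover have "(\<Sum>x\<in>S. \<Sum>z\<in>S. real (sdim x) * (2 * u x z - 2 * u z x))
     = 2 * (\<Sum>x\<in>S. \<Sum>z\<in>S. real (sdim x) * u x z) - 2 * (\<Sum>x\<in>S. \<Sum>z\<in>S. real (sdim x) * u z x)"
    by (simp add: sum_subtractf sum_distrib_left algebra_simps)
  moreover have "(\<Sum>x\<in>S. \<Sum>z\<in>S. real (sdim x) * u z x) = (\<Sum>x\<in>S. \<Sum>z\<in>S. real (sdim z) * u x z)"
    by (rule sum.swap)
  moreover have "2 * (\<Sum>x\<in>S. \<Sum>z\<in>S. real (sdim x) * u x z) - 2 * (\<Sum>x\<in>S. \<Sum>z\<in>S. real (sdim z) * u x z)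
      = 2 * (\<Sum>x\<in>S. \<Sum>z\<in>S. (real (sdim x) - real (sdim z)) * u x z)"
    by (simp add: sum_subtractf algebra_simps)
  moreover have "(\<Sum>x\<in>S. \<Sum>z\<in>S. (real (sdim x) - real (sdim z)) * u x z) = ff t"
    unfolding ff_def u_def by (intro sum.cong refl) (auto simp: upper_block_def)
  ultimately show ?thesis by simp
qed


lemma derU: "x\<in>S \<Longrightarrow> y\<in>S \<Longrightarrow> ((\<lambda>s. upper_block (D s) x y) has_vector_derivative upper_block (F t) x y) (at t)"
  unfolding upper_block_def by (auto intro!: derivative_eq_intros derF)

definition "CF = real (card S) * (2 * (2 * (1 + \<bar>\<beta>\<bar>) * s0) * s0)"

lemma B_bound2: "x\<in>S \<Longrightarrow> y\<in>S \<Longrightarrow> cmod (B t x y) \<le> 2 * (1 + \<bar>\<beta>\<bar>) * s0"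
proof -
  assume xy: "x\<in>S" "y\<in>S"
  have "cmod (B t x y) \<le> (1 + \<bar>\<beta>\<bar>) * (cmod (D t x y) + cmod (D t y x))" by (rule B_bound)
  also have "\<dots> \<le> (1 + \<bar>\<beta>\<bar>) * (s0 + s0)"
    using D_bound[OF xy] D_bound[OF xy(2,1)] by (intro mult_left_mono add_mono) auto
  finally show ?thesis by (simp add: algebra_simps)
qed

lemma F_bound: "x\<in>S \<Longrightarrow> y\<in>S \<Longrightarrow> cmod (F t x y) \<le> CF"
proof -
  assume xy: "x\<in>S" "y\<in>S"
  have "cmod (F t x y) \<le> (\<Sum>z\<in>S. cmod (B t x z * D t z y - D t x z * B t z y))"
    unfolding F_sum by (rule norm_sum)
  also have "\<dots> \<le> CF" unfolding CF_def
  proof (rule sum_bounded_above)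
    fix z assume z: "z\<in>S"
    have "cmod (B t x z * D t z y) \<le> 2 * (1 + \<bar>\<beta>\<bar>) * s0 * s0"
      unfolding norm_mult using B_bound2[OF xy(1) z] D_bound[OF z xy(2)] s0_nonneg
      by (intro mult_mono) auto
    moreover have "cmod (D t x z * B t z y) \<le> 2 * (1 + \<bar>\<beta>\<bar>) * s0 * s0"
      unfolding norm_mult using B_bound2[OF z xy(2)] D_bound[OF xy(1) z] s0_nonneg
      by (subst mult.commute, intro mult_mono) auto
    ultimately show "cmod (B t x z * D t z y - D t x z * B t z y) \<le> 2 * (2 * (1 + \<bar>\<beta>\<bar>) * s0) * s0"
      using norm_triangle_ineq4[of "B t x z * D t z y" "D t x z * B t z y"] by simp
  qed
  finally show ?thesis .
qed

definition "ff' t = (\<Sum>x\<in>S. \<Sum>z\<in>S. 2 * Re (cnj (upper_block (D t) x z) * upper_block (F t) x z))"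

lemma ff_deriv: "(ff has_real_derivative ff' t) (at t)"
  unfolding ff_def ff'_def by (intro DERIV_sum deriv_cmod2 derU) auto

lemma ff'_bound: "\<bar>ff' t\<bar> \<le> real (card S) * (real (card S) * (2 * s0 * CF))"
proof -
  have "\<bar>ff' t\<bar> \<le> (\<Sum>x\<in>S. \<bar>\<Sum>z\<in>S. 2 * Re (cnj (upper_block (D t) x z) * upper_block (F t) x z)\<bar>)"
    unfolding ff'_def by (rule sum_abs)
  also have "\<dots> \<le> (\<Sum>x\<in>S. real (card S) * (2 * s0 * CF))"
  proof (rule sum_mono)
    fix x assume x: "x\<in>S"
    have "\<bar>\<Sum>z\<in>S. 2 * Re (cnj (upper_block (D t) x z) * upper_block (F t) x z)\<bar>
       \<le> (\<Sum>z\<in>S. \<bar>2 * Re (cnj (upper_block (D t) x z) * upper_block (F t) x z)\<bar>)" by (rule sum_abs)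
    also have "\<dots> \<le> real (card S) * (2 * s0 * CF)"
    proof (rule sum_bounded_above)
      fix z assume z: "z\<in>S"
      have u1: "cmod (upper_block (D t) x z) \<le> s0"
        using D_bound[OF x z, of t] s0_nonneg by (auto simp: upper_block_def)
      have u2: "cmod (upper_block (F t) x z) \<le> CF"
        using F_bound[OF x z, of t] order_trans[OF norm_ge_zero F_bound[OF x z, of t]] by (auto simp: upper_block_def)
      have "\<bar>Re (cnj (upper_block (D t) x z) * upper_block (F t) x z)\<bar> \<le> cmod (upper_block (D t) x z) * cmod (upper_block (F t) x z)"
        using abs_Re_le_cmod[of "cnj (upper_block (D t) x z) * upper_block (F t) x z"] by (simp add: norm_mult)
      also have "\<dots> \<le> s0 * CF" using u1 u2 s0_nonneg by (intro mult_mono) auto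
      finally show "\<bar>2 * Re (cnj (upper_block (D t) x z) * upper_block (F t) x z)\<bar> \<le> 2 * s0 * CF" by simp
    qed
    finally show "\<bar>\<Sum>z\<in>S. 2 * Re (cnj (upper_block (D t) x z) * upper_block (F t) x z)\<bar> \<le> real (card S) * (2 * s0 * CF)" .
  qed
  finally show ?thesis by simp
qed

lemma Lf_bound: "\<bar>Lf t\<bar> \<le> (\<Sum>x\<in>S. real (sdim x) * s0)"
proof -
  have "\<bar>Lf t\<bar> \<le> (\<Sum>x\<in>S. \<bar>real (sdim x) * Re (D t x x)\<bar>)" unfolding Lf_def by (rule sum_abs)
  also have "\<dots> \<le> (\<Sum>x\<in>S. real (sdim x) * s0)"
  proof (rule sum_mono)
    fix x assume x: "x\<in>S"
    have "\<bar>Re (D t x x)\<bar> \<le> s0" using abs_Re_le_cmod[of "D t x x"] D_bound[OF x x, of t] by linarith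
    then show "\<bar>real (sdim x) * Re (D t x x)\<bar> \<le> real (sdim x) * s0"
      by (simp add: abs_mult mult_left_mono)
  qed
  finally show ?thesis .
qed

lemma ff_nonneg: "0 \<le> ff t" unfolding ff_def by (simp add: sum_nonneg)

lemma ff_top: "(ff \<longlongrightarrow> 0) at_top"
  by (rule barbalat_top[OF Lf_deriv ff_deriv ff'_bound Lf_bound ff_nonneg])

lemma ff_bot: "(ff \<longlongrightarrow> 0) at_bot"
  by (rule barbalat_bot[OF Lf_deriv ff_deriv ff'_bound Lf_bound ff_nonneg])

lemma U_le_ff: assumes "x\<in>S" "z\<in>S" shows "cmod (upper_block (D t) x z) \<le> sqrt (ff t)"
proof -
  have "(cmod (upper_block (D t) x z))^2 \<le> (\<Sum>v\<in>S. (cmod (upper_block (D t) x v))^2)"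
    using member_le_sum[of z S "\<lambda>v. (cmod (upper_block (D t) x v))^2"] fin assms by simp
  also have "\<dots> \<le> ff t"
    using member_le_sum[of x S "\<lambda>u. \<Sum>v\<in>S. (cmod (upper_block (D t) u v))^2"] fin assms
    unfolding ff_def by (simp add: sum_nonneg)
  finally show ?thesis by (simp add: real_le_rsqrt)
qed

lemma U_lim: assumes "x\<in>S" "z\<in>S" "F' = at_top \<or> F' = at_bot"
  shows "((\<lambda>t. upper_block (D t) x z) \<longlongrightarrow> 0) F'"
proof -
  have "(ff \<longlongrightarrow> 0) F'" using assms(3) ff_top ff_bot by auto
  then have "((\<lambda>t. sqrt (ff t)) \<longlongrightarrow> 0) F'" using tendsto_real_sqrt by fastforce
  then show ?thesis
  proof (rule tendsto_0_le[where K=1])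
    have "\<forall>t. cmod (upper_block (D t) x z) \<le> cmod (sqrt (ff t)) * 1"
      using U_le_ff[OF assms(1,2)] ff_nonneg by simp
    then show "\<forall>\<^sub>F t in F'. norm (upper_block (D t) x z) \<le> norm (sqrt (ff t)) * 1"
      by (intro always_eventually) simp
  qed
qed

lemma M_lim: assumes "x\<in>S" "y\<in>S" "F' = at_top \<or> F' = at_bot"
  shows "((\<lambda>t. dirac_M S (D t) x y) \<longlongrightarrow> 0) F'"
proof -
  have "((\<lambda>t. \<Sum>z\<in>S. (upper_block (D t) x z + cnj (upper_block (D t) z x)) *
        (upper_block (D t) z y + cnj (upper_block (D t) y z))) \<longlongrightarrow>
        (\<Sum>z\<in>S. (0 + cnj 0) * (0 + cnj 0))) F'"
    using assms by (intro tendsto_intros U_lim) auto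
  then show ?thesis by (simp add: dirac_M_def Let_def opmult_def opadd_def adj_def)
qed

lemma M_nonzero:
  assumes nz: "\<exists>x\<in>S. \<exists>y\<in>S. upper_block (D 0) x y \<noteq> 0"
  shows "\<exists>x\<in>S. \<exists>y\<in>S. dirac_M S (D t) x y \<noteq> 0"
proof (rule ccontr)
  assume "\<not> ?thesis"
  then have M0: "\<And>x y. x\<in>S \<Longrightarrow> y\<in>S \<Longrightarrow> dirac_M S (D t) x y = 0" by auto
  define Lm where "Lm x z = upper_block (D t) x z + cnj (upper_block (D t) z x)" for x z
  have Lmx: "Lm x z = 0" if "x\<in>S" "z\<in>S" for x z
  proof -
    have "dirac_M S (D t) x x = (\<Sum>z\<in>S. Lm x z * cnj (Lm x z))"
      by (simp add: dirac_M_def Let_def opmult_def opadd_def adj_def Lm_def add.commute)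
    also have "\<dots> = complex_of_real (\<Sum>z\<in>S. (cmod (Lm x z))^2)"
      by (simp only: of_real_sum complex_norm_square)
    finally have "complex_of_real (\<Sum>z\<in>S. (cmod (Lm x z))^2) = 0" using M0[OF that(1) that(1)] by simp
    then have "(\<Sum>z\<in>S. (cmod (Lm x z))^2) = 0" by (simp only: of_real_eq_0_iff)
    then have "\<forall>z\<in>S. (cmod (Lm x z))^2 = 0" using fin by (simp add: sum_nonneg_eq_0_iff)
    then show ?thesis using that by simp
  qed
  have "upper_block (D 0) x y = 0" if "x\<in>S" "y\<in>S" for x y
  proof (rule up_zero[of t])
    show "upper_block (D t) a b = 0" if "a\<in>S" "b\<in>S" for a b
      using Lmx[OF that] unfolding Lm_def by (auto simp: upper_block_def split: if_splits)
  qed (use that in auto)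
  then show False using nz by auto
qed

end


lemma simp_card: assumes "finite V" "x \<in> simplices V E" shows "card x \<ge> 1" "finite x"
proof -
  have "x \<subseteq> V" "x \<noteq> {}" using assms(2) unfolding simplices_def by auto
  then show "finite x" using assms(1) finite_subset by blast
  then show "card x \<ge> 1" using \<open>x \<noteq> {}\<close> by (simp add: Suc_le_eq card_gt_0_iff)
qed

lemma ext_d0_nz: assumes "finite V" "x \<in> simplices V E" "y \<in> simplices V E" "ext_d0 x y \<noteq> 0"
  shows "sdim x = sdim y + 1"
proof -
  have "card x = card y + 1" using assms(4) unfolding ext_d0_def by (auto split: if_splits)
  then show ?thesis unfolding sdim_def using simp_card(1)[OF assms(1,3)] by simp
qed

theorem mainTheorem12:
  fixes V :: "'a::linorder set" and E :: "'a \<Rightarrow> 'a \<Rightarrow> bool"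
    and \<beta> :: real and D :: "real \<Rightarrow> 'a set \<Rightarrow> 'a set \<Rightarrow> complex"
  assumes "finite V"
    and "\<forall>x y. E x y \<longrightarrow> E y x"
    and "\<forall>x. \<not> E x x"
    and "\<exists>x\<in>V. \<exists>y\<in>V. E x y"
    and "is_dirac_deformation V E \<beta> D"
  shows "(\<forall>x\<in>simplices V E. \<forall>y\<in>simplices V E.
            ((\<lambda>t. dirac_M (simplices V E) (D t) x y) \<longlongrightarrow> 0) at_top \<and>
            ((\<lambda>t. dirac_M (simplices V E) (D t) x y) \<longlongrightarrow> 0) at_bot)
       \<and> (\<forall>t. \<exists>x\<in>simplices V E. \<exists>y\<in>simplices V E. dirac_M (simplices V E) (D t) x y \<noteq> 0)"
proof -
  let ?S = "simplices V E"
  have init: "\<And>x y. x\<in>?S \<Longrightarrow> y\<in>?S \<Longrightarrow> D 0 x y = ext_d0 x y + cnj (ext_d0 y x)"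
    using assms(5) unfolding is_dirac_deformation_def Let_def dirac0_def opadd_def adj_def by auto
  interpret deform ?S \<beta> D
  proof
    have "?S \<subseteq> Pow V" unfolding simplices_def by auto
    then show "finite ?S" using assms(1) finite_subset by blast
    show "((\<lambda>s. D s x y) has_vector_derivative
         (opmult ?S (deform_B \<beta> (D t)) (D t) x y - opmult ?S (D t) (deform_B \<beta> (D t)) x y)) (at t)"
      if "x \<in> ?S" "y \<in> ?S" for t x y
      using assms(5) that unfolding is_dirac_deformation_def Let_def by blast
    show "D 0 x y = cnj (D 0 y x)" if "x \<in> ?S" "y \<in> ?S" for x y
      using init[OF that] init[OF that(2,1)] by simp
    show "D 0 x y = 0" if "x \<in> ?S" "y \<in> ?S" "sdim y + 2 \<le> sdim x \<or> sdim x + 2 \<le> sdim y" for x y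
    proof -
      have "ext_d0 x y = 0" using ext_d0_nz[OF assms(1) that(1,2)] that(3) by (cases "ext_d0 x y = 0") auto
      moreover have "ext_d0 y x = 0" using ext_d0_nz[OF assms(1) that(2,1)] that(3) by (cases "ext_d0 y x = 0") auto
      ultimately show ?thesis using init[OF that(1,2)] by simp
    qed
  qed
  obtain a b where ab: "a \<in> V" "b \<in> V" "E a b" using assms(4) by blast
  have "a \<noteq> b" using ab(3) assms(3) by auto
  have sab: "{a, b} \<in> ?S" using ab assms(2) unfolding simplices_def by auto
  have sa: "{a} \<in> ?S" using ab unfolding simplices_def by auto
  have cab: "card {a, b} = 2" using \<open>a \<noteq> b\<close> by simp
  have e1: "ext_d0 {a, b} {a} \<noteq> 0" unfolding ext_d0_def using cab by simp
  have e2: "ext_d0 {a} {a, b} = 0" unfolding ext_d0_def using cab by simp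
  have "upper_block (D 0) {a, b} {a} \<noteq> 0"
    unfolding upper_block_def init[OF sab sa] using e1 e2 cab by (simp add: sdim_def)
  then have nz: "\<exists>x\<in>?S. \<exists>y\<in>?S. upper_block (D 0) x y \<noteq> 0" using sab sa by blast
  show ?thesis
    using M_lim M_nonzero[OF nz] by blast
qed

end
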